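(* Assume $a_j\neq0$ for $1\le j\le4$, $v_{12}^2+a_2a_4\neq0$ and $v_{22}^2+a_3a_4\neq0$. Then: (i) $V(\mathbf v,d)\cap H_0$ consists of three distinct points $[0,1,0]$, $[0,r_1,R_1]$, $[0,r_2,R_2]$, where $r_j\neq0$, $R_j\neq0$ and $a_4R_j^2-2v_{12}r_jR_j-a_2r_j^2=0$ for $j=1,2$; (ii) $V(\mathbf v,d)\cap H_1$ consists of three distinct points $[1,0,0]$, $[s_1,0,S_1]$, $[s_2,0,S_2]$, where $s_j\neq0$, $S_j\neq0$ and $a_4S_j^2+2v_{22}s_jS_j-a_3s_j^2=0$ for $j=1,2$; (iii) $V(\mathbf v,d)\cap H_2$ consists only of the two points $[1,0,0]$, $[0,1,0]$; (iv) the four points $[0,r_j,R_j]$, $[s_j,0,S_j]$ ($j=1,2$) are smooth points of $V(\mathbf v,d)$.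
   Context: Parameters $[\mathbf v,d]=[v_{11},v_{12},v_{21},v_{22},d]\in\mathbb{C}P^4$ (complex, not all zero); $a_1=v_{11}-v_{21}-d$, $a_2=-v_{11}-v_{21}+d$, $a_3=v_{11}+v_{21}+d$, $a_4=-v_{11}+v_{21}-d$. On $\mathbb{C}P^2$ with coordinates $[u_0,u_1,u_2]$, $V(\mathbf v,d)$ is the curve $P=0$ where $P=a_4u_2^4+2(v_{22}u_0-v_{12}u_1)u_2^3-(a_3u_0^2+a_2u_1^2)u_2^2+2u_0u_1(v_{22}u_1-v_{12}u_0)u_2+a_1u_0^2u_1^2$, and $H_j=\{[u_0,u_1,u_2]:u_j=0\}$ are the coordinate lines. A point of $V$ is smooth if not all partial derivatives of $P$ vanish there. *)

theory Defs
  imports "HOL-Analysis.Analysis"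
begin

type_synonym cpt = "complex \<times> complex \<times> complex"

definition a1 :: "complex \<Rightarrow> complex \<Rightarrow> complex \<Rightarrow> complex \<Rightarrow> complex \<Rightarrow> complex" where
  "a1 v11 v12 v21 v22 d = v11 - v21 - d"
definition a2 :: "complex \<Rightarrow> complex \<Rightarrow> complex \<Rightarrow> complex \<Rightarrow> complex \<Rightarrow> complex" where
  "a2 v11 v12 v21 v22 d = - v11 - v21 + d"
definition a3 :: "complex \<Rightarrow> complex \<Rightarrow> complex \<Rightarrow> complex \<Rightarrow> complex \<Rightarrow> complex" where
  "a3 v11 v12 v21 v22 d = v11 + v21 + d"
definition a4 :: "complex \<Rightarrow> complex \<Rightarrow> complex \<Rightarrow> complex \<Rightarrow> complex \<Rightarrow> complex" where
  "a4 v11 v12 v21 v22 d = - v11 + v21 - d"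

definition Ppoly :: "complex \<Rightarrow> complex \<Rightarrow> complex \<Rightarrow> complex \<Rightarrow> complex \<Rightarrow> cpt \<Rightarrow> complex" where
  "Ppoly v11 v12 v21 v22 d u = (case u of (u0, u1, u2) \<Rightarrow>
     a4 v11 v12 v21 v22 d * u2^4 + 2 * (v22 * u0 - v12 * u1) * u2^3
     - (a3 v11 v12 v21 v22 d * u0^2 + a2 v11 v12 v21 v22 d * u1^2) * u2^2
     + 2 * u0 * u1 * (v22 * u1 - v12 * u0) * u2
     + a1 v11 v12 v21 v22 d * u0^2 * u1^2)"

definition proj_pt :: "cpt \<Rightarrow> cpt set" where
  "proj_pt u = {w. \<exists>c. c \<noteq> 0 \<and> w = (c * fst u, c * fst (snd u), c * snd (snd u))}"

definition curveV :: "complex \<Rightarrow> complex \<Rightarrow> complex \<Rightarrow> complex \<Rightarrow> complex \<Rightarrow> cpt set set" where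
  "curveV v11 v12 v21 v22 d =
     {proj_pt u | u. u \<noteq> (0, 0, 0) \<and> Ppoly v11 v12 v21 v22 d u = 0}"

definition H0 :: "cpt set set" where
  "H0 = {proj_pt u | u. u \<noteq> (0, 0, 0) \<and> fst u = 0}"
definition H1 :: "cpt set set" where
  "H1 = {proj_pt u | u. u \<noteq> (0, 0, 0) \<and> fst (snd u) = 0}"
definition H2 :: "cpt set set" where
  "H2 = {proj_pt u | u. u \<noteq> (0, 0, 0) \<and> snd (snd u) = 0}"

definition smooth_point :: "complex \<Rightarrow> complex \<Rightarrow> complex \<Rightarrow> complex \<Rightarrow> complex \<Rightarrow> cpt \<Rightarrow> bool" where
  "smooth_point v11 v12 v21 v22 d u \<longleftrightarrow>
     u \<noteq> (0, 0, 0) \<and> Ppoly v11 v12 v21 v22 d u = 0 \<and>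
     \<not> (deriv (\<lambda>t. Ppoly v11 v12 v21 v22 d (t, fst (snd u), snd (snd u))) (fst u) = 0 \<and>
        deriv (\<lambda>t. Ppoly v11 v12 v21 v22 d (fst u, t, snd (snd u))) (fst (snd u)) = 0 \<and>
        deriv (\<lambda>t. Ppoly v11 v12 v21 v22 d (fst u, fst (snd u), t)) (snd (snd u)) = 0)"

end

theory Submission
  imports Defs
begin

lemma proj_pt_self: "u \<in> proj_pt u"
  unfolding proj_pt_def by (rule CollectI, rule exI[of _ 1]) (cases u, auto)

lemma proj_pt_eqD: "proj_pt u = proj_pt v \<Longrightarrow> \<exists>c. c \<noteq> 0 \<and> u = (c * fst v, c * fst (snd v), c * snd (snd v))"
  using proj_pt_self[of u] unfolding proj_pt_def by auto

lemma proj_pt_scale: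
  assumes "(k::complex) \<noteq> 0" shows "proj_pt (k*a, k*b, k*c) = proj_pt (a,b,c)"
proof -
  have "(\<exists>c'. c' \<noteq> 0 \<and> w = (c' * (k*a), c' * (k*b), c' * (k*c))) \<longleftrightarrow>
        (\<exists>c'. c' \<noteq> 0 \<and> w = (c' * a, c' * b, c' * c))" for w
  proof
    assume "\<exists>c'. c' \<noteq> 0 \<and> w = (c' * (k*a), c' * (k*b), c' * (k*c))"
    then obtain c' where "c' \<noteq> 0" "w = (c' * (k*a), c' * (k*b), c' * (k*c))" by blast
    then show "\<exists>c'. c' \<noteq> 0 \<and> w = (c' * a, c' * b, c' * c)"
      using assms by (intro exI[of _ "c'*k"]) (simp add: mult_ac)
  next
    assume "\<exists>c'. c' \<noteq> 0 \<and> w = (c' * a, c' * b, c' * c)"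
    then obtain c' where "c' \<noteq> 0" "w = (c' * a, c' * b, c' * c)" by blast
    then show "\<exists>c'. c' \<noteq> 0 \<and> w = (c' * (k*a), c' * (k*b), c' * (k*c))"
      using assms by (intro exI[of _ "c'/k"]) simp
  qed
  then show ?thesis unfolding proj_pt_def by simp
qed

lemma proj_pt_ne:
  assumes "v \<notin> proj_pt u" shows "proj_pt u \<noteq> proj_pt v"
  using assms proj_pt_self[of v] by auto

lemma Ppoly_scale: "Ppoly v11 v12 v21 v22 d (k*a, k*b, k*c) = k^4 * Ppoly v11 v12 v21 v22 d (a,b,c)"
  unfolding Ppoly_def by (simp add: power_mult_distrib) (simp add: algebra_simps power3_eq_cube power4_eq_xxxx power2_eq_square)

lemma mem_curveV:
  assumes "u \<noteq> (0,0,0)"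
  shows "proj_pt u \<in> curveV v11 v12 v21 v22 d \<longleftrightarrow> Ppoly v11 v12 v21 v22 d u = 0"
proof
  assume "proj_pt u \<in> curveV v11 v12 v21 v22 d"
  then obtain u' where "proj_pt u = proj_pt u'" "Ppoly v11 v12 v21 v22 d u' = 0"
    unfolding curveV_def by blast
  then obtain c where "u = (c * fst u', c * fst (snd u'), c * snd (snd u'))"
    using proj_pt_eqD by blast
  then show "Ppoly v11 v12 v21 v22 d u = 0"
    using Ppoly_scale[of v11 v12 v21 v22 d c] \<open>Ppoly v11 v12 v21 v22 d u' = 0\<close>
    by (cases u') simp
qed (use assms in \<open>cases u; auto simp: curveV_def\<close>)

lemma mem_H0: assumes "u \<noteq> (0,0,0)" shows "proj_pt u \<in> H0 \<longleftrightarrow> fst u = 0"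
proof
  assume "proj_pt u \<in> H0"
  then obtain u' where "proj_pt u = proj_pt u'" "fst u' = 0" unfolding H0_def by blast
  then obtain c where "u = (c * fst u', c * fst (snd u'), c * snd (snd u'))" using proj_pt_eqD by blast
  then show "fst u = 0" using \<open>fst u' = 0\<close> by simp
next
  assume "fst u = 0"
  then show "proj_pt u \<in> H0" unfolding H0_def using assms by blast
qed

lemma mem_H1: assumes "u \<noteq> (0,0,0)" shows "proj_pt u \<in> H1 \<longleftrightarrow> fst (snd u) = 0"
proof
  assume "proj_pt u \<in> H1"
  then obtain u' where "proj_pt u = proj_pt u'" "fst (snd u') = 0" unfolding H1_def by blast
  then obtain c where "u = (c * fst u', c * fst (snd u'), c * snd (snd u'))" using proj_pt_eqD by blast
  then show "fst (snd u) = 0" using \<open>fst (snd u') = 0\<close> by simp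
next
  assume "fst (snd u) = 0"
  then show "proj_pt u \<in> H1" unfolding H1_def using assms by blast
qed

lemma mem_H2: assumes "u \<noteq> (0,0,0)" shows "proj_pt u \<in> H2 \<longleftrightarrow> snd (snd u) = 0"
proof
  assume "proj_pt u \<in> H2"
  then obtain u' where "proj_pt u = proj_pt u'" "snd (snd u') = 0" unfolding H2_def by blast
  then obtain c where "u = (c * fst u', c * fst (snd u'), c * snd (snd u'))" using proj_pt_eqD by blast
  then show "snd (snd u) = 0" using \<open>snd (snd u') = 0\<close> by simp
next
  assume "snd (snd u) = 0"
  then show "proj_pt u \<in> H2" unfolding H2_def using assms by blast
qed

lemma quad_factor:
  fixes a b c w x :: complex
  assumes "a \<noteq> 0" "w^2 = b^2 + a*c"
  shows "a*x^2 - 2*b*x - c = a*(x - (b+w)/a)*(x - (b-w)/a)"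
proof -
  have "a*(x - (b+w)/a)*(x - (b-w)/a) = (a*x - (b+w))*(a*x - (b-w))/a"
    using assms by (simp add: field_simps)
  also have "\<dots> = (a*a*x^2 - 2*a*b*x + b^2 - w^2)/a" by (simp add: algebra_simps power2_eq_square)
  also have "\<dots> = a*x^2 - 2*b*x - c" using assms by (simp add: field_simps power2_eq_square)
  finally show ?thesis by simp
qed

lemma deriv3: "deriv (\<lambda>t. Ppoly v11 v12 v21 v22 d (x, y, t)) z =
   4 * a4 v11 v12 v21 v22 d * z^3 + 6 * (v22 * x - v12 * y) * z^2
   - 2 * (a3 v11 v12 v21 v22 d * x^2 + a2 v11 v12 v21 v22 d * y^2) * z
   + 2 * x * y * (v22 * y - v12 * x)"
  unfolding Ppoly_def
  by (rule DERIV_imp_deriv) (auto intro!: derivative_eq_intros simp: algebra_simps)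

lemma P_H0: "Ppoly v11 v12 v21 v22 d (0, b, c) = c^2 * (a4 v11 v12 v21 v22 d * c^2 - 2 * v12 * b * c - a2 v11 v12 v21 v22 d * b^2)"
  unfolding Ppoly_def by (simp add: power2_eq_square power3_eq_cube power4_eq_xxxx ring_distribs mult_ac)
lemma P_H1: "Ppoly v11 v12 v21 v22 d (b, 0, c) = c^2 * (a4 v11 v12 v21 v22 d * c^2 + 2 * v22 * b * c - a3 v11 v12 v21 v22 d * b^2)"
  unfolding Ppoly_def by (simp add: power2_eq_square power3_eq_cube power4_eq_xxxx ring_distribs mult_ac)
lemma P_H2: "Ppoly v11 v12 v21 v22 d (a, b, 0) = a1 v11 v12 v21 v22 d * a^2 * b^2"
  unfolding Ppoly_def by simp

theorem lemma6p4:
  fixes v11 v12 v21 v22 d :: complex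
  assumes "(v11, v12, v21, v22, d) \<noteq> (0, 0, 0, 0, 0)"
    and "a1 v11 v12 v21 v22 d \<noteq> 0" and "a2 v11 v12 v21 v22 d \<noteq> 0"
    and "a3 v11 v12 v21 v22 d \<noteq> 0" and "a4 v11 v12 v21 v22 d \<noteq> 0"
    and "v12^2 + a2 v11 v12 v21 v22 d * a4 v11 v12 v21 v22 d \<noteq> 0"
    and "v22^2 + a3 v11 v12 v21 v22 d * a4 v11 v12 v21 v22 d \<noteq> 0"
  shows "\<exists>r1 R1 r2 R2 s1 S1 s2 S2 :: complex.
     curveV v11 v12 v21 v22 d \<inter> H0 = {proj_pt (0, 1, 0), proj_pt (0, r1, R1), proj_pt (0, r2, R2)}
   \<and> card {proj_pt (0, 1, 0), proj_pt (0, r1, R1), proj_pt (0, r2, R2)} = 3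
   \<and> r1 \<noteq> 0 \<and> R1 \<noteq> 0 \<and> r2 \<noteq> 0 \<and> R2 \<noteq> 0
   \<and> a4 v11 v12 v21 v22 d * R1^2 - 2 * v12 * r1 * R1 - a2 v11 v12 v21 v22 d * r1^2 = 0
   \<and> a4 v11 v12 v21 v22 d * R2^2 - 2 * v12 * r2 * R2 - a2 v11 v12 v21 v22 d * r2^2 = 0
   \<and> curveV v11 v12 v21 v22 d \<inter> H1 = {proj_pt (1, 0, 0), proj_pt (s1, 0, S1), proj_pt (s2, 0, S2)}
   \<and> card {proj_pt (1, 0, 0), proj_pt (s1, 0, S1), proj_pt (s2, 0, S2)} = 3
   \<and> s1 \<noteq> 0 \<and> S1 \<noteq> 0 \<and> s2 \<noteq> 0 \<and> S2 \<noteq> 0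
   \<and> a4 v11 v12 v21 v22 d * S1^2 + 2 * v22 * s1 * S1 - a3 v11 v12 v21 v22 d * s1^2 = 0
   \<and> a4 v11 v12 v21 v22 d * S2^2 + 2 * v22 * s2 * S2 - a3 v11 v12 v21 v22 d * s2^2 = 0
   \<and> curveV v11 v12 v21 v22 d \<inter> H2 = {proj_pt (1, 0, 0), proj_pt (0, 1, 0)}
   \<and> smooth_point v11 v12 v21 v22 d (0, r1, R1) \<and> smooth_point v11 v12 v21 v22 d (0, r2, R2)
   \<and> smooth_point v11 v12 v21 v22 d (s1, 0, S1) \<and> smooth_point v11 v12 v21 v22 d (s2, 0, S2)"
proof -
  obtain A1 where eA1: "a1 v11 v12 v21 v22 d = A1" by blast
  obtain A2 where eA2: "a2 v11 v12 v21 v22 d = A2" by blast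
  obtain A3 where eA3: "a3 v11 v12 v21 v22 d = A3" by blast
  obtain A4 where eA4: "a4 v11 v12 v21 v22 d = A4" by blast
  note eA = eA1 eA2 eA3 eA4
  have nA1: "A1 \<noteq> 0" using assms(2) eA1 by simp
  have nA2: "A2 \<noteq> 0" using assms(3) eA2 by simp
  have nA3: "A3 \<noteq> 0" using assms(4) eA3 by simp
  have nA4: "A4 \<noteq> 0" using assms(5) eA4 by simp
  define w where "w = csqrt (v12^2 + A2*A4)"
  define w' where "w' = csqrt (v22^2 + A3*A4)"
  have w2: "w^2 = v12^2 + A4*A2" unfolding w_def by (simp add: mult.commute)
  have w'2: "w'^2 = (-v22)^2 + A4*A3" unfolding w'_def by (simp add: mult.commute)
  have e6: "v12^2 + A2*A4 \<noteq> 0" using assms(6) eA2 eA4 by simp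
  have e7: "v22^2 + A3*A4 \<noteq> 0" using assms(7) eA3 eA4 by simp
  have nw: "w \<noteq> 0" unfolding w_def using e6 by simp
  have nw': "w' \<noteq> 0" unfolding w'_def using e7 by simp
  define R1 where "R1 = (v12 + w)/A4"
  define R2 where "R2 = (v12 - w)/A4"
  define S1 where "S1 = (-v22 + w')/A4"
  define S2 where "S2 = (-v22 - w')/A4"
  have qR: "A4*x^2 - 2* v12*x - A2 = A4*(x - R1)*(x - R2)" for x
    unfolding R1_def R2_def by (rule quad_factor[OF nA4 w2])
  have qS: "A4*x^2 + 2* v22*x - A3 = A4*(x - S1)*(x - S2)" for x
    using quad_factor[OF nA4 w'2, of x] unfolding S1_def S2_def by simp
  have rR1: "A4*R1^2 - 2* v12*R1 - A2 = 0" using qR[of R1] by simp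
  have rR2: "A4*R2^2 - 2* v12*R2 - A2 = 0" using qR[of R2] by simp
  have rS1: "A4*S1^2 + 2* v22*S1 - A3 = 0" using qS[of S1] by simp
  have rS2: "A4*S2^2 + 2* v22*S2 - A3 = 0" using qS[of S2] by simp
  have nR: "R1 \<noteq> 0" "R2 \<noteq> 0" using qR[of 0] nA2 by auto
  have nS: "S1 \<noteq> 0" "S2 \<noteq> 0" using qS[of 0] nA3 by auto
  have dR: "R1 \<noteq> R2" using nw nA4 unfolding R1_def R2_def by (auto simp: divide_simps)
  have dS: "S1 \<noteq> S2" using nw' nA4 unfolding S1_def S2_def by (auto simp: divide_simps)
  have R1w: "A4*R1 - v12 = w" and R2w: "A4*R2 - v12 = - w"
    using nA4 unfolding R1_def R2_def by (auto simp: field_simps)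
  have S1w: "A4*S1 + v22 = w'" and S2w: "A4*S2 + v22 = - w'"
    using nA4 unfolding S1_def S2_def by (auto simp: field_simps)
  have scale: "proj_pt (b*x, b*y, b*z) = proj_pt (x,y,z)" if "b \<noteq> 0" for b x y z :: complex
    using proj_pt_scale[OF that] .

  have H0eq: "curveV v11 v12 v21 v22 d \<inter> H0 = {proj_pt (0, 1, 0), proj_pt (0, 1, R1), proj_pt (0, 1, R2)}"
  proof (rule set_eqI, rule iffI)
    fix X assume X: "X \<in> curveV v11 v12 v21 v22 d \<inter> H0"
    then obtain u where u: "X = proj_pt u" "u \<noteq> (0,0,0)" "Ppoly v11 v12 v21 v22 d u = 0"
      unfolding curveV_def by blast
    then have "fst u = 0" using X mem_H0 by blast
    then obtain b c where ub: "u = (0, b, c)" by (cases u) auto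
    have P0: "c^2 * (A4*c^2 - 2* v12*b*c - A2*b^2) = 0"
      using u(3) unfolding ub P_H0 eA .
    show "X \<in> {proj_pt (0, 1, 0), proj_pt (0, 1, R1), proj_pt (0, 1, R2)}"
    proof (cases "c = 0")
      case True
      then have "b \<noteq> 0" using u(2) ub by auto
      then have "X = proj_pt (b*0, b*1, b*0)" using u(1) ub True by simp
      then show ?thesis using scale[OF \<open>b \<noteq> 0\<close>, of 0 1 0] by simp
    next
      case False
      then have Q: "A4*c^2 - 2* v12*b*c - A2*b^2 = 0" using P0 by simp
      have "b \<noteq> 0" proof
        assume "b = 0" then show False using Q nA4 False by simp
      qed
      have "b^2 * (A4*(c/b)^2 - 2* v12*(c/b) - A2) = A4*c^2 - 2* v12*b*c - A2*b^2"
        using \<open>b \<noteq> 0\<close> by (simp add: field_simps power2_eq_square)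
      then have "A4*(c/b)^2 - 2* v12*(c/b) - A2 = 0" using Q \<open>b \<noteq> 0\<close> by simp
      then have "c/b = R1 \<or> c/b = R2" using qR[of "c/b"] nA4 by simp
      then have "c = b*R1 \<or> c = b*R2" using \<open>b \<noteq> 0\<close> by (auto simp: field_simps)
      then have "X = proj_pt (b*0, b*1, b*R1) \<or> X = proj_pt (b*0, b*1, b*R2)" using u(1) ub by auto
      then show ?thesis using scale[OF \<open>b \<noteq> 0\<close>, of 0 1 R1] scale[OF \<open>b \<noteq> 0\<close>, of 0 1 R2] by auto
    qed
  next
    fix X assume "X \<in> {proj_pt (0, 1, 0), proj_pt (0, 1, R1), proj_pt (0, 1, R2)}"
    then show "X \<in> curveV v11 v12 v21 v22 d \<inter> H0"
      using mem_curveV[of "(0,1,R1)" v11 v12 v21 v22 d] mem_curveV[of "(0,1,R2)" v11 v12 v21 v22 d]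
        mem_curveV[of "(0,1,0)" v11 v12 v21 v22 d]
        mem_H0[of "(0,1,R1)"] mem_H0[of "(0,1,R2)"] mem_H0[of "(0,1,0)"]
      by (auto simp: P_H0 eA rR1 rR2)
  qed
  have H1eq: "curveV v11 v12 v21 v22 d \<inter> H1 = {proj_pt (1, 0, 0), proj_pt (1, 0, S1), proj_pt (1, 0, S2)}"
  proof (rule set_eqI, rule iffI)
    fix X assume X: "X \<in> curveV v11 v12 v21 v22 d \<inter> H1"
    then obtain u where u: "X = proj_pt u" "u \<noteq> (0,0,0)" "Ppoly v11 v12 v21 v22 d u = 0"
      unfolding curveV_def by blast
    then have "fst (snd u) = 0" using X mem_H1 by blast
    then obtain b c where ub: "u = (b, 0, c)" by (cases u) auto
    have P0: "c^2 * (A4*c^2 + 2* v22*b*c - A3*b^2) = 0"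
      using u(3) unfolding ub P_H1 eA .
    show "X \<in> {proj_pt (1, 0, 0), proj_pt (1, 0, S1), proj_pt (1, 0, S2)}"
    proof (cases "c = 0")
      case True
      then have "b \<noteq> 0" using u(2) ub by auto
      then have "X = proj_pt (b*1, b*0, b*0)" using u(1) ub True by simp
      then show ?thesis using scale[OF \<open>b \<noteq> 0\<close>, of 1 0 0] by simp
    next
      case False
      then have Q: "A4*c^2 + 2* v22*b*c - A3*b^2 = 0" using P0 by simp
      have "b \<noteq> 0" proof
        assume "b = 0" then show False using Q nA4 False by simp
      qed
      have "b^2 * (A4*(c/b)^2 + 2* v22*(c/b) - A3) = A4*c^2 + 2* v22*b*c - A3*b^2"
        using \<open>b \<noteq> 0\<close> by (simp add: field_simps power2_eq_square)
      then have "A4*(c/b)^2 + 2* v22*(c/b) - A3 = 0" using Q \<open>b \<noteq> 0\<close> by simp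
      then have "c/b = S1 \<or> c/b = S2" using qS[of "c/b"] nA4 by simp
      then have "c = b*S1 \<or> c = b*S2" using \<open>b \<noteq> 0\<close> by (auto simp: field_simps)
      then have "X = proj_pt (b*1, b*0, b*S1) \<or> X = proj_pt (b*1, b*0, b*S2)" using u(1) ub by auto
      then show ?thesis using scale[OF \<open>b \<noteq> 0\<close>, of 1 0 S1] scale[OF \<open>b \<noteq> 0\<close>, of 1 0 S2] by auto
    qed
  next
    fix X assume "X \<in> {proj_pt (1, 0, 0), proj_pt (1, 0, S1), proj_pt (1, 0, S2)}"
    then show "X \<in> curveV v11 v12 v21 v22 d \<inter> H1"
      using mem_curveV[of "(1,0,S1)" v11 v12 v21 v22 d] mem_curveV[of "(1,0,S2)" v11 v12 v21 v22 d]
        mem_curveV[of "(1,0,0)" v11 v12 v21 v22 d]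
        mem_H1[of "(1,0,S1)"] mem_H1[of "(1,0,S2)"] mem_H1[of "(1,0,0)"]
      by (auto simp: P_H1 eA rS1 rS2)
  qed
  have H2eq: "curveV v11 v12 v21 v22 d \<inter> H2 = {proj_pt (1, 0, 0), proj_pt (0, 1, 0)}"
  proof (rule set_eqI, rule iffI)
    fix X assume X: "X \<in> curveV v11 v12 v21 v22 d \<inter> H2"
    then obtain u where u: "X = proj_pt u" "u \<noteq> (0,0,0)" "Ppoly v11 v12 v21 v22 d u = 0"
      unfolding curveV_def by blast
    then have "snd (snd u) = 0" using X mem_H2 by blast
    then obtain a b where ub: "u = (a, b, 0)" by (cases u) auto
    have P0: "A1 * a^2 * b^2 = 0"
      using u(3) unfolding ub P_H2 eA .
    then have "a = 0 \<or> b = 0" using nA1 by simp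
    then show "X \<in> {proj_pt (1, 0, 0), proj_pt (0, 1, 0)}"
    proof
      assume "a = 0"
      then have "b \<noteq> 0" using u(2) ub by auto
      then have "X = proj_pt (b*0, b*1, b*0)" using u(1) ub \<open>a = 0\<close> by simp
      then show ?thesis using scale[OF \<open>b \<noteq> 0\<close>, of 0 1 0] by simp
    next
      assume "b = 0"
      then have "a \<noteq> 0" using u(2) ub by auto
      then have "X = proj_pt (a*1, a*0, a*0)" using u(1) ub \<open>b = 0\<close> by simp
      then show ?thesis using scale[OF \<open>a \<noteq> 0\<close>, of 1 0 0] by simp
    qed
  next
    fix X assume "X \<in> {proj_pt (1, 0, 0), proj_pt (0, 1, 0)}"
    then show "X \<in> curveV v11 v12 v21 v22 d \<inter> H2"
      using mem_curveV[of "(1,0,0)" v11 v12 v21 v22 d] mem_curveV[of "(0,1,0)" v11 v12 v21 v22 d]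
        mem_H2[of "(1,0,0)"] mem_H2[of "(0,1,0)"]
      by (auto simp: P_H2)
  qed
  have card0: "card {proj_pt (0, 1, 0), proj_pt (0, 1, R1), proj_pt (0, 1, R2)} = 3"
  proof -
    have "proj_pt (0, 1, 0) \<noteq> proj_pt (0, 1, R1)" "proj_pt (0, 1, 0) \<noteq> proj_pt (0, 1, R2)"
         "proj_pt (0, 1, R1) \<noteq> proj_pt (0, 1, R2)"
      by (rule proj_pt_ne; use nR dR in \<open>auto simp: proj_pt_def\<close>)+
    then show ?thesis by simp
  qed
  have card1: "card {proj_pt (1, 0, 0), proj_pt (1, 0, S1), proj_pt (1, 0, S2)} = 3"
  proof -
    have "proj_pt (1, 0, 0) \<noteq> proj_pt (1, 0, S1)" "proj_pt (1, 0, 0) \<noteq> proj_pt (1, 0, S2)"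
         "proj_pt (1, 0, S1) \<noteq> proj_pt (1, 0, S2)"
      by (rule proj_pt_ne; use nS dS in \<open>auto simp: proj_pt_def\<close>)+
    then show ?thesis by simp
  qed
  have smR: "smooth_point v11 v12 v21 v22 d (0, 1, R)" if rR: "A4*R^2 - 2* v12*R - A2 = 0"
    and nR0: "R \<noteq> 0" and nRw: "A4*R - v12 \<noteq> 0" for R
  proof -
    have eA2': "A2 = A4*R^2 - 2* v12*R" using rR by simp
    have "4 * A4 * R^3 + 6 * (v22 * 0 - v12 * 1) * R^2 - 2 * (A3 * 0^2 + A2 * 1^2) * R
          + 2 * 0 * 1 * (v22 * 1 - v12 * 0) = 2 * R^2 * (A4*R - v12)"
      unfolding eA2' by (simp add: algebra_simps power2_eq_square power3_eq_cube)
    moreover have "2 * R^2 * (A4*R - v12) \<noteq> 0" using nR0 nRw by simp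
    moreover have "Ppoly v11 v12 v21 v22 d (0, 1, R) = 0" by (simp add: P_H0 eA rR)
    ultimately show ?thesis unfolding smooth_point_def fst_conv snd_conv deriv3
      by (simp add: eA)
  qed
  have smS: "smooth_point v11 v12 v21 v22 d (1, 0, S)" if rS: "A4*S^2 + 2* v22*S - A3 = 0"
    and nS0: "S \<noteq> 0" and nSw: "A4*S + v22 \<noteq> 0" for S
  proof -
    have eA3': "A3 = A4*S^2 + 2* v22*S" using rS by simp
    have "4 * A4 * S^3 + 6 * (v22 * 1 - v12 * 0) * S^2 - 2 * (A3 * 1^2 + A2 * 0^2) * S
          + 2 * 1 * 0 * (v22 * 0 - v12 * 1) = 2 * S^2 * (A4*S + v22)"
      unfolding eA3' by (simp add: algebra_simps power2_eq_square power3_eq_cube)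
    moreover have "2 * S^2 * (A4*S + v22) \<noteq> 0" using nS0 nSw by simp
    moreover have "Ppoly v11 v12 v21 v22 d (1, 0, S) = 0" by (simp add: P_H1 eA rS)
    ultimately show ?thesis unfolding smooth_point_def fst_conv snd_conv deriv3
      by (simp add: eA)
  qed
  show ?thesis
    apply (rule exI[of _ 1], rule exI[of _ R1], rule exI[of _ 1], rule exI[of _ R2])
    apply (rule exI[of _ 1], rule exI[of _ S1], rule exI[of _ 1], rule exI[of _ S2])
    using H0eq H1eq H2eq card0 card1 nR nS rR1 rR2 rS1 rS2
      smR[OF rR1 nR(1)] smR[OF rR2 nR(2)] smS[OF rS1 nS(1)] smS[OF rS2 nS(2)]
      R1w R2w S1w S2w nw nw'
    by (simp add: eA)
qed

end
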